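(* For each integer $n\ge0$ let $P_n(x)=\omega_n^-(x)$ denote the number of square-free words of length $n$ over an alphabet with $x$ letters ($x$ a positive integer). Then there is a polynomial in $x$ of degree $n$ with integer coefficients and leading coefficient $1$ which coincides with $P_n(x)$ for all positive integers $x$. Moreover, for $n>1$, $P_n(x)$ is a multiple of $x(x-1)$, and for $n>3$, $P_n(x)$ is a multiple of $x(x-1)(x-2)$. Explicitly, $P_0=1$, $P_1=x$, $P_2=x(x-1)$, $P_3=x(x-1)^2$, $P_4=x^2(x-1)(x-2)$.
   Context: A square is a nonempty word of the form $uu$; a word is square-free if no contiguous subword (factor) of it, including the word itself, is a square. *)

theory Defs
  imports "HOL-Computational_Algebra.Polynomial"
begin

definition square_free :: "'a list \<Rightarrow> bool" where
  "square_free w \<longleftrightarrow> \<not> (\<exists>v u z. u \<noteq> [] \<and> w = v @ u @ u @ z)"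

definition sqfree_count :: "nat \<Rightarrow> nat \<Rightarrow> nat" where
  "sqfree_count n x = card {w :: nat list. length w = n \<and> set w \<subseteq> {..<x} \<and> square_free w}"

end

theory Submission
  imports Defs
begin


lemma sqf_idx:
  "square_free w \<longleftrightarrow> \<not>(\<exists>i l. 0 < l \<and> i + 2*l \<le> length w \<and> (\<forall>t<l. w!(i+t) = w!(i+l+t)))"
proof
  assume sf: "square_free w"
  show "\<not>(\<exists>i l. 0 < l \<and> i + 2*l \<le> length w \<and> (\<forall>t<l. w!(i+t) = w!(i+l+t)))"
  proof
    assume "\<exists>i l. 0 < l \<and> i + 2*l \<le> length w \<and> (\<forall>t<l. w!(i+t) = w!(i+l+t))"
    then obtain i l where l: "0 < l" "i + 2*l \<le> length w" and eq: "\<forall>t<l. w!(i+t) = w!(i+l+t)" by blast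
    have e1: "w = take i w @ drop i w" by simp
    have e2: "drop i w = take l (drop i w) @ drop l (drop i w)" by (rule append_take_drop_id[symmetric])
    have e3: "drop l (drop i w) = take l (drop (i+l) w) @ drop (i+2*l) w"
      by (metis append_take_drop_id drop_drop add.commute mult_2 add.assoc)
    have e4: "take l (drop (i+l) w) = take l (drop i w)"
      by (rule nth_equalityI) (use l eq in \<open>auto simp: add.assoc\<close>)
    have "w = take i w @ take l (drop i w) @ take l (drop i w) @ drop (i+2*l) w"
      using e1 e2 e3 e4 by (metis append.assoc)
    moreover have "take l (drop i w) \<noteq> []" using l by auto
    ultimately show False using sf unfolding square_free_def by blast
  qed
next
  assume h: "\<not>(\<exists>i l. 0 < l \<and> i + 2*l \<le> length w \<and> (\<forall>t<l. w!(i+t) = w!(i+l+t)))"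
  show "square_free w" unfolding square_free_def
  proof
    assume "\<exists>v u z. u \<noteq> [] \<and> w = v @ u @ u @ z"
    then obtain v u z where u: "u \<noteq> []" "w = v @ u @ u @ z" by blast
    have "\<forall>t<length u. w!(length v+t) = w!(length v+length u+t)"
      using u by (auto simp: nth_append)
    moreover have "length v + 2 * length u \<le> length w" using u by simp
    ultimately show False using h u by (metis length_greater_0_conv)
  qed
qed

definition same_pat :: "nat list \<Rightarrow> nat list \<Rightarrow> bool" where
  "same_pat w u \<longleftrightarrow> length w = length u \<and> (\<forall>i<length u. \<forall>j<length u. (w!i = w!j) = (u!i = u!j))"

lemma same_pat_sym: "same_pat w u \<Longrightarrow> same_pat u w"
  unfolding same_pat_def by auto

lemma same_pat_trans: "same_pat w u \<Longrightarrow> same_pat u v \<Longrightarrow> same_pat w v"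
  unfolding same_pat_def by auto

lemma same_pat_sqf:
  assumes sp: "same_pat w u"
  shows "square_free w \<longleftrightarrow> square_free u"
proof -
  have len: "length w = length u" using sp unfolding same_pat_def by simp
  have key: "(\<forall>t<l. w!(i+t) = w!(i+l+t)) = (\<forall>t<l. u!(i+t) = u!(i+l+t))"
    if "i + 2*l \<le> length w" for i l
  proof -
    have "(w!(i+t) = w!(i+l+t)) = (u!(i+t) = u!(i+l+t))" if "t < l" for t
    proof -
      have "i+t < length u" "i+l+t < length u" using \<open>t<l\<close> \<open>i + 2*l \<le> length w\<close> len by linarith+
      then show ?thesis using sp unfolding same_pat_def by blast
    qed
    then show ?thesis by blast
  qed
  show ?thesis unfolding sqf_idx using key len by metis
qed

definition canon :: "nat list \<Rightarrow> bool" where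
  "canon u \<longleftrightarrow> (\<forall>j<length u. u!j \<le> j \<and> u!(u!j) = u!j)"

lemma canon_least:
  assumes "canon u" "j < length u"
  shows "u!j = (LEAST i. i < length u \<and> u!i = u!j)"
proof -
  have a: "u!j \<le> j" "u!(u!j) = u!j" using assms unfolding canon_def by auto
  show ?thesis
  proof (rule sym, rule Least_equality)
    show "u!j < length u \<and> u!(u!j) = u!j" using a assms by simp
  next
    fix y assume "y < length u \<and> u!y = u!j"
    then show "u!j \<le> y" using assms unfolding canon_def by metis
  qed
qed

lemma canon_unique:
  assumes "canon u" "canon v" "same_pat u v"
  shows "u = v"
proof (rule nth_equalityI)
  show len: "length u = length v" using assms(3) unfolding same_pat_def by simp
  fix j assume j: "j < length u"
  have "(\<lambda>i. i < length u \<and> u!i = u!j) = (\<lambda>i. i < length v \<and> v!i = v!j)"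
    using assms(3) j len unfolding same_pat_def by (auto simp: fun_eq_iff) 
  then show "u!j = v!j" using canon_least[OF assms(1) j] canon_least[OF assms(2)] j len by simp
qed

definition cf :: "nat list \<Rightarrow> nat list" where
  "cf w = map (\<lambda>j. LEAST i. i < length w \<and> w!i = w!j) [0..<length w]"

lemma cf_props:
  shows "canon (cf w)" "same_pat w (cf w)" "length (cf w) = length w"
proof -
  let ?L = "\<lambda>j. LEAST i. i < length w \<and> w!i = w!j"
  have L: "?L j < length w \<and> w!(?L j) = w!j" "?L j \<le> j" if "j < length w" for j
    using that by (auto intro: LeastI2[of _ j] Least_le)
  have LL: "?L (?L j) = ?L j" if "j < length w" for j
    using L[OF that] by simp
  show "length (cf w) = length w" unfolding cf_def by simp
  show "canon (cf w)" unfolding canon_def cf_def using L LL by auto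
  show "same_pat w (cf w)" unfolding same_pat_def cf_def length_map length_upt diff_zero
  proof (intro conjI allI impI)
    fix i j assume ij: "i < length w" "j < length w"
    show "(w!i = w!j) = (map ?L [0..<length w] ! i = map ?L [0..<length w] ! j)"
    proof
      assume "w!i = w!j" then show "map ?L [0..<length w] ! i = map ?L [0..<length w] ! j"
        using ij by simp
    next
      assume "map ?L [0..<length w] ! i = map ?L [0..<length w] ! j"
      then have "?L i = ?L j" using ij by simp
      then show "w!i = w!j" using L(1)[OF ij(1)] L(1)[OF ij(2)] by metis
    qed
  qed simp
qed




definition SP :: "nat \<Rightarrow> nat list \<Rightarrow> nat list set" where
  "SP x u = {w. set w \<subseteq> {..<x} \<and> same_pat w u}"

lemma finite_SP: "finite (SP x u)"
proof -
  have "SP x u \<subseteq> {w. set w \<subseteq> {..<x} \<and> length w = length u}"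
    unfolding SP_def same_pat_def by auto
  moreover have "finite {w. set w \<subseteq> {..<x} \<and> length w = length u}"
    by (rule finite_lists_length_eq) simp
  ultimately show ?thesis by (rule finite_subset)
qed

lemma same_pat_card_le:
  assumes "same_pat w u"
  shows "card (set w) \<le> card (set u)"
proof -
  define g where "g a = w!(LEAST i. i < length u \<and> u!i = a)" for a
  have "set w \<subseteq> g ` set u"
  proof
    fix c assume "c \<in> set w"
    then obtain j where j: "j < length w" "w!j = c" by (auto simp: in_set_conv_nth)
    have len: "length w = length u" using assms unfolding same_pat_def by simp
    let ?i = "LEAST i. i < length u \<and> u!i = u!j"
    have i: "?i < length u \<and> u!?i = u!j" using LeastI[of "\<lambda>i. i < length u \<and> u!i = u!j" j] j len by simp
    then have "w!?i = w!j" using assms j len unfolding same_pat_def by auto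
    then have "g (u!j) = c" unfolding g_def using j by simp
    moreover have "u!j \<in> set u" using j len by simp
    ultimately show "c \<in> g ` set u" by blast
  qed
  then have "card (set w) \<le> card (g ` set u)" by (rule card_mono[rotated]) simp
  also have "\<dots> \<le> card (set u)" by (rule card_image_le) simp
  finally show ?thesis .
qed

lemma same_pat_card: "same_pat w u \<Longrightarrow> card (set w) = card (set u)"
  using same_pat_card_le same_pat_sym le_antisym by metis

lemma same_pat_snoc:
  assumes "length w = length u"
  shows "same_pat (w@[a]) (u@[b]) \<longleftrightarrow> same_pat w u \<and> (\<forall>i<length u. (w!i = a) = (u!i = b))"
proof
  assume h: "same_pat (w@[a]) (u@[b])"
  have 1: "same_pat w u" unfolding same_pat_def
  proof (intro conjI allI impI)
    fix i j assume ij: "i < length u" "j < length u"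
    have H: "\<forall>i<Suc (length u). \<forall>j<Suc (length u). ((w@[a])!i = (w@[a])!j) = ((u@[b])!i = (u@[b])!j)"
      using h assms unfolding same_pat_def by simp
    then have "((w@[a])!i = (w@[a])!j) = ((u@[b])!i = (u@[b])!j)" using ij by (meson less_SucI)
    then show "(w!i = w!j) = (u!i = u!j)" using ij assms by (simp add: nth_append)
  qed (use assms in simp)
  have 2: "\<forall>i<length u. (w!i = a) = (u!i = b)"
  proof (intro allI impI)
    fix i assume i: "i < length u"
    have H: "\<forall>i<Suc (length u). \<forall>j<Suc (length u). ((w@[a])!i = (w@[a])!j) = ((u@[b])!i = (u@[b])!j)"
      using h assms unfolding same_pat_def by simp
    then have "((w@[a])!i = (w@[a])!(length u)) = ((u@[b])!i = (u@[b])!(length u))" using i by (meson less_SucI lessI)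
    then show "(w!i = a) = (u!i = b)" using i assms by (simp add: nth_append)
  qed
  show "same_pat w u \<and> (\<forall>i<length u. (w!i = a) = (u!i = b))" using 1 2 by simp
next
  assume h: "same_pat w u \<and> (\<forall>i<length u. (w!i = a) = (u!i = b))"
  show "same_pat (w@[a]) (u@[b])" unfolding same_pat_def
  proof (intro conjI allI impI)
    fix i j assume ij: "i < length (u@[b])" "j < length (u@[b])"
    then consider "i < length u" "j < length u" | "i = length u" "j < length u"
      | "i < length u" "j = length u" | "i = length u" "j = length u" by fastforce
    then show "((w@[a])!i = (w@[a])!j) = ((u@[b])!i = (u@[b])!j)"
      using h assms unfolding same_pat_def by cases (auto simp: nth_append)
  qed (use assms in simp)
qed

definition ffn :: "nat \<Rightarrow> nat \<Rightarrow> nat" where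
  "ffn x k = (\<Prod>i<k. (x - i))"

lemma card_SP: "card (SP x u) = ffn x (card (set u))"
proof (induction u rule: rev_induct)
  case Nil
  have "SP x [] = {[]}" unfolding SP_def same_pat_def by auto
  then show ?case by (simp add: ffn_def)
next
  case (snoc b u)
  define A where "A w = {a. a < x \<and> (\<forall>i<length u. (w!i = a) = (u!i = b))}" for w
  have eq: "SP x (u@[b]) = (\<lambda>(w,a). w@[a]) ` (SIGMA w:SP x u. A w)"
  proof
    show "SP x (u@[b]) \<subseteq> (\<lambda>(w,a). w@[a]) ` (SIGMA w:SP x u. A w)"
    proof
      fix v assume v: "v \<in> SP x (u@[b])"
      then have "v \<noteq> []" unfolding SP_def same_pat_def by auto
      then obtain w a where va: "v = w@[a]" by (metis rev_exhaust)
      have len: "length w = length u" using v va unfolding SP_def same_pat_def by simp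
      have "w \<in> SP x u" "a \<in> A w" using v va same_pat_snoc[OF len] unfolding SP_def A_def by auto
      then show "v \<in> (\<lambda>(w,a). w@[a]) ` (SIGMA w:SP x u. A w)" using va by auto
    qed
  next
    show "(\<lambda>(w,a). w@[a]) ` (SIGMA w:SP x u. A w) \<subseteq> SP x (u@[b])"
    proof clarify
      fix w a assume "w \<in> SP x u" "a \<in> A w"
      moreover have "length w = length u" using \<open>w \<in> SP x u\<close> unfolding SP_def same_pat_def by simp
      ultimately show "w@[a] \<in> SP x (u@[b])" using same_pat_snoc unfolding SP_def A_def by auto
    qed
  qed
  have inj: "inj_on (\<lambda>(w,a). w@[a]) (SIGMA w:SP x u. A w)"
    by (auto simp: inj_on_def)
  have finA: "finite (A w)" for w unfolding A_def by auto
  define c where "c = (if b \<in> set u then 1 else x - card (set u))"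
  have cA: "card (A w) = c" if w: "w \<in> SP x u" for w
  proof -
    have sp: "same_pat w u" and sw: "set w \<subseteq> {..<x}" using w unfolding SP_def by auto
    have len: "length w = length u" using sp unfolding same_pat_def by simp
    show ?thesis
    proof (cases "b \<in> set u")
      case True
      then obtain i0 where i0: "i0 < length u" "u!i0 = b" by (auto simp: in_set_conv_nth)
      have "A w = {w!i0}"
      proof
        show "A w \<subseteq> {w!i0}" using i0 unfolding A_def by auto
        have "w!i0 < x" using sw i0 len by (auto simp: set_conv_nth)
        then show "{w!i0} \<subseteq> A w" using sp i0 len unfolding A_def same_pat_def by auto
      qed
      then show ?thesis using True c_def by simp
    next
      case False
      have "A w = {..<x} - set w"
        using False len unfolding A_def by (auto simp: in_set_conv_nth)
      then have "card (A w) = x - card (set w)" using sw by (simp add: card_Diff_subset)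
      then show ?thesis using False c_def same_pat_card[OF sp] by simp
    qed
  qed
  have "card (SP x (u@[b])) = card (SIGMA w:SP x u. A w)"
    unfolding eq by (rule card_image[OF inj])
  also have "\<dots> = (\<Sum>w\<in>SP x u. card (A w))"
    using finite_SP finA by (simp add: card_SigmaI)
  also have "\<dots> = card (SP x u) * c" using cA by simp
  also have "\<dots> = ffn x (card (set (u@[b])))"
    using snoc.IH unfolding c_def ffn_def by (auto simp: insert_absorb)
  finally show ?case .
qed




definition CS :: "nat \<Rightarrow> nat list set" where
  "CS n = {u. length u = n \<and> canon u \<and> square_free u}"

lemma finite_CS: "finite (CS n)"
proof -
  have "CS n \<subseteq> {u. set u \<subseteq> {..<n} \<and> length u = n}"
    unfolding CS_def canon_def by (auto simp: in_set_conv_nth) (meson le_less_trans)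
  moreover have "finite {u. set u \<subseteq> {..<n} \<and> length u = n}"
    by (rule finite_lists_length_eq) simp
  ultimately show ?thesis by (rule finite_subset)
qed

lemma count_sum: "sqfree_count n x = (\<Sum>u\<in>CS n. ffn x (card (set u)))"
proof -
  have eq: "{w :: nat list. length w = n \<and> set w \<subseteq> {..<x} \<and> square_free w} = (\<Union>u\<in>CS n. SP x u)"
  proof
    show "{w :: nat list. length w = n \<and> set w \<subseteq> {..<x} \<and> square_free w} \<subseteq> (\<Union>u\<in>CS n. SP x u)"
    proof
      fix w :: "nat list" assume "w \<in> {w :: nat list. length w = n \<and> set w \<subseteq> {..<x} \<and> square_free w}"
      then have w: "length w = n" "set w \<subseteq> {..<x}" "square_free w" by auto
      have "cf w \<in> CS n" using cf_props[of w] w same_pat_sqf unfolding CS_def by auto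
      moreover have "w \<in> SP x (cf w)" using cf_props[of w] w unfolding SP_def by auto
      ultimately show "w \<in> (\<Union>u\<in>CS n. SP x u)" by blast
    qed
  next
    show "(\<Union>u\<in>CS n. SP x u) \<subseteq> {w :: nat list. length w = n \<and> set w \<subseteq> {..<x} \<and> square_free w}"
      unfolding CS_def SP_def using same_pat_sqf by (auto simp: same_pat_def)
  qed
  have disj: "\<forall>u\<in>CS n. \<forall>v\<in>CS n. u \<noteq> v \<longrightarrow> SP x u \<inter> SP x v = {}"
  proof (intro ballI impI)
    fix u v assume uv: "u \<in> CS n" "v \<in> CS n" "u \<noteq> v"
    show "SP x u \<inter> SP x v = {}"
    proof (rule ccontr)
      assume "SP x u \<inter> SP x v \<noteq> {}"
      then obtain w where "same_pat w u" "same_pat w v" unfolding SP_def by auto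
      then have "same_pat u v" using same_pat_sym same_pat_trans by blast
      then show False using canon_unique uv unfolding CS_def by blast
    qed
  qed
  have "sqfree_count n x = card (\<Union>u\<in>CS n. SP x u)"
    unfolding sqfree_count_def eq ..
  also have "\<dots> = (\<Sum>u\<in>CS n. card (SP x u))"
    by (rule card_UN_disjoint[OF finite_CS]) (use finite_SP disj in auto)
  also have "\<dots> = (\<Sum>u\<in>CS n. ffn x (card (set u)))" by (simp add: card_SP)
  finally show ?thesis .
qed

fun ffp :: "nat \<Rightarrow> int poly" where
  "ffp 0 = 1"
| "ffp (Suc k) = ffp k * [:- of_nat k, 1:]"

lemma ffn_Suc: "ffn x (Suc k) = ffn x k * (x - k)"
  unfolding ffn_def by simp

lemma ffn_zero: "x < k \<Longrightarrow> ffn x k = 0"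
  unfolding ffn_def by (rule prod_zero) (auto intro: bexI[of _ x])

lemma poly_ffp: "poly (ffp k) (int x) = int (ffn x k)"
proof (induction k)
  case 0 then show ?case by (simp add: ffn_def)
next
  case (Suc k)
  show ?case
  proof (cases "k \<le> x")
    case True then show ?thesis using Suc by (simp add: ffn_Suc of_nat_diff algebra_simps)
  next
    case False
    then have "ffn x k = 0" by (intro ffn_zero) simp
    then show ?thesis using Suc by (simp add: ffn_Suc)
  qed
qed

lemma ffp_monic: "degree (ffp k) = k \<and> lead_coeff (ffp k) = 1 \<and> ffp k \<noteq> 0"
proof (induction k)
  case 0 then show ?case by simp
next
  case (Suc k)
  have nz: "[:- of_nat k, 1:] \<noteq> (0 :: int poly)" by simp
  have e: "ffp (Suc k) = ffp k * [:- of_nat k, 1:]" by (simp only: ffp.simps)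
  have d1: "degree (ffp (Suc k)) = Suc k" unfolding e using Suc nz by (simp add: degree_mult_eq del: mult_pCons_right)
  have l0: "lead_coeff (ffp (Suc k)) = lead_coeff (ffp k) * lead_coeff [:- of_nat k, 1:]"
    unfolding e by (rule lead_coeff_mult)
  have l1: "lead_coeff (ffp k) = 1" using Suc by blast
  have l2: "lead_coeff (ffp (Suc k)) = 1" using l0 l1 by (simp del: ffp.simps)
  have n1: "ffp (Suc k) \<noteq> 0" unfolding e using Suc nz by (simp del: mult_pCons_right)
  show ?case using d1 l2 n1 by blast
qed

lemma ffp_dvd: "m \<le> k \<Longrightarrow> ffp m dvd ffp k"
proof (induction k rule: dec_induct)
  case base then show ?case by simp
next
  case (step k) then show ?case by (simp only: ffp.simps) (rule dvd_mult2)
qed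

lemma ffp2: "ffp 2 = [:0, 1:] * [:-1, 1:]"
  by (simp add: numeral_2_eq_2)

lemma ffp3: "ffp 3 = [:0, 1:] * [:-1, 1:] * [:-2, 1:]"
  by (simp add: numeral_3_eq_3 numeral_2_eq_2)

lemma sum_deg_less:
  assumes "finite A" "\<forall>u\<in>A. degree (f u :: int poly) < n"
  shows "sum f A = 0 \<or> degree (sum f A) < n"
  using assms
proof (induction A rule: finite_induct)
  case empty then show ?case by simp
next
  case (insert a A)
  then have "sum f A = 0 \<or> degree (sum f A) < n" "degree (f a) < n" by auto
  then show ?case using insert degree_add_le_max[of "f a" "sum f A"] by auto
qed

lemma distinct_sf: "distinct w \<Longrightarrow> square_free w"
  unfolding square_free_def by (auto simp: neq_Nil_conv)

lemma iota_CS: "[0..<n] \<in> CS n"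
  unfolding CS_def canon_def by (auto intro: distinct_sf)

lemma CS_full:
  assumes "u \<in> CS n" "card (set u) = n"
  shows "u = [0..<n]"
proof -
  have len: "length u = n" and c: "canon u" using assms unfolding CS_def by auto
  have d: "distinct u" using card_distinct[of u] assms len by simp
  show ?thesis
  proof (rule nth_equalityI)
    show "length u = length [0..<n]" using len by simp
    fix j assume j: "j < length u"
    have "u!j \<le> j" "u!(u!j) = u!j" using c j unfolding canon_def by auto
    then have "u!j = j" using d j nth_eq_iff_index_eq[OF d] by (metis le_less_trans)
    then show "u!j = [0..<n]!j" using j len by simp
  qed
qed

lemma sq_ne:
  assumes "square_free w" "0 < l" "i + 2*l \<le> length w"
  shows "\<exists>t<l. w!(i+t) \<noteq> w!(i+l+t)"
  using assms unfolding sqf_idx by blast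

lemma sq_ne1:
  assumes "square_free w" "i + 2 \<le> length w"
  shows "w!i \<noteq> w!(Suc i)"
  using sq_ne[OF assms(1), of 1 i] assms by auto

lemma card2:
  assumes "square_free w" "2 \<le> length w"
  shows "2 \<le> card (set w)"
proof -
  obtain t where "t < 1" "w!(0+t) \<noteq> w!(0+1+t)" using sq_ne[OF assms(1), of 1 0] assms by auto
  then have ne: "w!0 \<noteq> w!1" by simp
  have "{w!0, w!1} \<subseteq> set w" using assms by (auto intro!: nth_mem)
  then have "card {w!0, w!1} \<le> card (set w)" by (rule card_mono[rotated]) simp
  then show ?thesis using ne by simp
qed

lemma card3:
  assumes "square_free w" "4 \<le> length w"
  shows "3 \<le> card (set w)"
proof -
  have n01: "w!0 \<noteq> w!1" using sq_ne1[OF assms(1), of 0] assms by simp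
  have n12: "w!1 \<noteq> w!2" using sq_ne1[OF assms(1), of 1] assms by (simp add: eval_nat_numeral)
  have n23: "w!2 \<noteq> w!3" using sq_ne1[OF assms(1), of 2] assms by (simp add: eval_nat_numeral)
  obtain t where t: "t < 2" "w!(0+t) \<noteq> w!(0+2+t)" using sq_ne[OF assms(1), of 2 0] assms by auto
  then have n0213: "w!0 \<noteq> w!2 \<or> w!1 \<noteq> w!3"
    using less_2_cases[of t] by (auto simp: eval_nat_numeral)
  have sub: "{w!0, w!1, w!2, w!3} \<subseteq> set w" using assms by (auto intro!: nth_mem)
  have "3 \<le> card {w!0, w!1, w!2, w!3}"
  proof (cases "w!0 = w!2")
    case True
    then have "card {w!0, w!1, w!2, w!3} = 3" using n01 n12 n23 n0213 by (auto simp: card_insert_if)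
    then show ?thesis by simp
  next
    case False
    have "card {w!0, w!1, w!2} = 3" using n01 n12 False by auto
    moreover have "card {w!0, w!1, w!2} \<le> card {w!0, w!1, w!2, w!3}" by (rule card_mono) auto
    ultimately show ?thesis by simp
  qed
  also have "\<dots> \<le> card (set w)" by (rule card_mono[OF _ sub]) simp
  finally show ?thesis .
qed

definition Pn :: "nat \<Rightarrow> int poly" where
  "Pn n = (\<Sum>u\<in>CS n. ffp (card (set u)))"

lemma poly_Pn: "poly (Pn n) (int x) = int (sqfree_count n x)"
  unfolding Pn_def count_sum by (simp add: poly_sum poly_ffp)

lemma Pn_deg: "degree (Pn n) = n \<and> lead_coeff (Pn n) = 1"
proof -
  define r where "r = (\<Sum>u\<in>CS n - {[0..<n]}. ffp (card (set u)))"
  have "Pn n = ffp n + r" unfolding Pn_def r_def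
    using sum.remove[OF finite_CS iota_CS, of "\<lambda>u. ffp (card (set u))"] by simp
  moreover have "r = 0 \<or> degree r < n" unfolding r_def
  proof (rule sum_deg_less)
    show "finite (CS n - {[0..<n]})" using finite_CS by simp
    show "\<forall>u\<in>CS n - {[0..<n]}. degree (ffp (card (set u))) < n"
    proof
      fix u assume u: "u \<in> CS n - {[0..<n]}"
      have "card (set u) \<le> n" using u card_length[of u] unfolding CS_def by auto
      moreover have "card (set u) \<noteq> n" using CS_full u by blast
      ultimately show "degree (ffp (card (set u))) < n" using ffp_monic by simp
    qed
  qed
  ultimately show ?thesis using ffp_monic[of n]
    by (auto simp: degree_add_eq_right lead_coeff_add_le add.commute[of "ffp n"] coeff_eq_0)
qed

lemma Pn_dvd2: "1 < n \<Longrightarrow> [:0, 1:] * [:-1, 1:] dvd Pn n"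
  unfolding Pn_def ffp2[symmetric]
proof (rule dvd_sum)
  fix u assume "1 < n" "u \<in> CS n"
  then have "2 \<le> card (set u)" using card2[of u] unfolding CS_def by auto
  then show "ffp 2 dvd ffp (card (set u))" by (rule ffp_dvd)
qed

lemma Pn_dvd3: "3 < n \<Longrightarrow> [:0, 1:] * [:-1, 1:] * [:-2, 1:] dvd Pn n"
  unfolding Pn_def ffp3[symmetric]
proof (rule dvd_sum)
  fix u assume "3 < n" "u \<in> CS n"
  then have "3 \<le> card (set u)" using card3[of u] unfolding CS_def by auto
  then show "ffp 3 dvd ffp (card (set u))" by (rule ffp_dvd)
qed




lemma canon_snoc:
  "canon (u@[b]) \<longleftrightarrow> canon u \<and> (b = length u \<or> (b < length u \<and> u!b = b))"
proof
  assume h: "canon (u@[b])"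
  have "canon u" unfolding canon_def
  proof (intro allI impI)
    fix j assume j: "j < length u"
    have "(u@[b])!j \<le> j" "(u@[b])!((u@[b])!j) = (u@[b])!j" using h j unfolding canon_def by auto
    then show "u!j \<le> j \<and> u!(u!j) = u!j" using j by (auto simp: nth_append)
  qed
  moreover have "(u@[b])!(length u) \<le> length u" "(u@[b])!((u@[b])!(length u)) = (u@[b])!(length u)"
    using h unfolding canon_def by auto
  then have "b = length u \<or> (b < length u \<and> u!b = b)" by (auto simp: nth_append split: if_splits)
  ultimately show "canon u \<and> (b = length u \<or> (b < length u \<and> u!b = b))" by blast
next
  assume h: "canon u \<and> (b = length u \<or> (b < length u \<and> u!b = b))"
  show "canon (u@[b])" unfolding canon_def
  proof (intro allI impI)
    fix j assume j: "j < length (u@[b])"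
    show "(u@[b])!j \<le> j \<and> (u@[b])!((u@[b])!j) = (u@[b])!j"
    proof (cases "j < length u")
      case True
      then have "u!j \<le> j" "u!(u!j) = u!j" using h unfolding canon_def by auto
      then show ?thesis using True by (auto simp: nth_append)
    next
      case False
      then have "j = length u" using j by simp
      then show ?thesis using h by (auto simp: nth_append)
    qed
  qed
qed

lemma canon0: "canon []" unfolding canon_def by simp

lemma canon1: "canon [a] \<longleftrightarrow> a = 0"
  using canon_snoc[of "[]" a] canon0 by simp

lemma canon2: "canon [a,b] \<longleftrightarrow> a = 0 \<and> (b = 0 \<or> b = 1)"
proof -
  have c: "canon [a,b] \<longleftrightarrow> canon [a] \<and> (b = 1 \<or> (b < 1 \<and> [a]!b = b))"
    using canon_snoc[of "[a]" b] by simp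
  have "(b < 1 \<and> [a]!b = b) \<longleftrightarrow> b = 0 \<and> a = 0" by auto
  then show ?thesis using c canon1 by blast
qed

lemma canon3: "canon [a,b,c] \<longleftrightarrow> a = 0 \<and> (b = 0 \<or> b = 1) \<and> (c = 2 \<or> c = 0 \<or> (c = 1 \<and> b = 1))"
proof -
  have cc: "canon [a,b,c] \<longleftrightarrow> canon [a,b] \<and> (c = 2 \<or> (c < 2 \<and> [a,b]!c = c))"
    using canon_snoc[of "[a,b]" c] by (simp add: numeral_2_eq_2)
  have e: "c < 2 \<longleftrightarrow> c = 0 \<or> c = 1" by arith
  have "(c < 2 \<and> [a,b]!c = c) \<longleftrightarrow> (c = 0 \<and> a = 0) \<or> (c = 1 \<and> b = 1)"
    unfolding e by auto
  then show ?thesis using cc canon2 by blast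
qed

lemma canon4: "canon [a,b,c,d] \<longleftrightarrow> canon [a,b,c] \<and> (d = 3 \<or> d = 0 \<or> (d = 1 \<and> b = 1) \<or> (d = 2 \<and> c = 2))"
proof -
  have cc: "canon [a,b,c,d] \<longleftrightarrow> canon [a,b,c] \<and> (d = 3 \<or> (d < 3 \<and> [a,b,c]!d = d))"
    using canon_snoc[of "[a,b,c]" d] by (simp add: numeral_3_eq_3)
  have e: "d < 3 \<longleftrightarrow> d = 0 \<or> d = 1 \<or> d = 2" by arith
  have "(d < 3 \<and> [a,b,c]!d = d) \<longleftrightarrow> (d = 0 \<and> a = 0) \<or> (d = 1 \<and> b = 1) \<or> (d = 2 \<and> c = 2)"
    unfolding e by auto
  moreover have "canon [a,b,c] \<Longrightarrow> a = 0" using canon3 by blast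
  ultimately show ?thesis using cc by blast
qed

lemma sf2: "square_free [a,b] \<longleftrightarrow> a \<noteq> b"
proof
  assume "square_free [a,b]" then show "a \<noteq> b" using sq_ne1[of "[a,b]" 0] by simp
qed (auto intro: distinct_sf)

lemma sf3: "square_free [a,b,c] \<longleftrightarrow> a \<noteq> b \<and> b \<noteq> c"
proof
  assume s: "square_free [a,b,c]"
  show "a \<noteq> b \<and> b \<noteq> c" using sq_ne1[OF s, of 0] sq_ne1[OF s, of 1] by simp
next
  assume h: "a \<noteq> b \<and> b \<noteq> c"
  show "square_free [a,b,c]" unfolding sqf_idx
  proof (rule notI, elim exE conjE)
    fix i l assume l: "0 < l" "i + 2*l \<le> length [a,b,c]" and e: "\<forall>t<l. [a,b,c]!(i+t) = [a,b,c]!(i+l+t)"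
    have e0: "[a,b,c]!i = [a,b,c]!(i+l)" using e l(1) by (metis add_0_right)
    have "l = 1 \<and> (i = 0 \<or> i = 1)" using l by auto
    then show False using e0 h by auto
  qed
qed

lemma sf4: "square_free [a,b,c,d] \<longleftrightarrow> a \<noteq> b \<and> b \<noteq> c \<and> c \<noteq> d \<and> (a \<noteq> c \<or> b \<noteq> d)"
proof
  assume s: "square_free [a,b,c,d]"
  obtain t where t: "t < 2" "[a,b,c,d]!(0+t) \<noteq> [a,b,c,d]!(0+2+t)" using sq_ne[OF s, of 2 0] by auto
  then have "a \<noteq> c \<or> b \<noteq> d" using less_2_cases[of t] by (auto simp: eval_nat_numeral)
  then show "a \<noteq> b \<and> b \<noteq> c \<and> c \<noteq> d \<and> (a \<noteq> c \<or> b \<noteq> d)"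
    using sq_ne1[OF s, of 0] sq_ne1[OF s, of 1] sq_ne1[OF s, of 2] by (simp add: eval_nat_numeral)
next
  assume h: "a \<noteq> b \<and> b \<noteq> c \<and> c \<noteq> d \<and> (a \<noteq> c \<or> b \<noteq> d)"
  show "square_free [a,b,c,d]" unfolding sqf_idx
  proof (rule notI, elim exE conjE)
    fix i l assume l: "0 < l" "i + 2*l \<le> length [a,b,c,d]" and e: "\<forall>t<l. [a,b,c,d]!(i+t) = [a,b,c,d]!(i+l+t)"
    have e0: "[a,b,c,d]!i = [a,b,c,d]!(i+l)" using e l(1) by (metis add_0_right)
    have "l = 1 \<and> (i = 0 \<or> i = 1 \<or> i = 2) \<or> (l = 2 \<and> i = 0)" using l by auto
    then show False
    proof
      assume "l = 1 \<and> (i = 0 \<or> i = 1 \<or> i = 2)"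
      then show False using e0 h by (auto simp: eval_nat_numeral)
    next
      assume li: "l = 2 \<and> i = 0"
      have "b = d" using e[rule_format, of 1] li by simp
      then show False using e0 h li by (auto simp: eval_nat_numeral)
    qed
  qed
qed

lemma len4: "length u = 4 \<Longrightarrow> \<exists>a b c d. u = [a,b,c,d]"
  by (auto simp: eval_nat_numeral length_Suc_conv)
lemma len3: "length u = 3 \<Longrightarrow> \<exists>a b c. u = [a,b,c]"
  by (auto simp: eval_nat_numeral length_Suc_conv)
lemma len2: "length u = 2 \<Longrightarrow> \<exists>a b. u = [a,b]"
  by (auto simp: eval_nat_numeral length_Suc_conv)
lemma len1: "length u = 1 \<Longrightarrow> \<exists>a. u = [a]"
  by (auto simp: length_Suc_conv)

lemma CS0: "CS 0 = {[]}"
  unfolding CS_def using canon0 distinct_sf[of "[]"] by auto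

lemma CS1: "CS 1 = {[0]}"
proof
  show "CS 1 \<subseteq> {[0]}"
  proof
    fix u assume "u \<in> CS 1"
    then have u: "length u = 1" "canon u" "square_free u" unfolding CS_def by auto
    then obtain a where "u = [a]" using len1 by blast
    then show "u \<in> {[0]}" using u(2) by (simp add: canon1)
  qed
  show "{[0]} \<subseteq> CS 1" unfolding CS_def using distinct_sf[of "[0::nat]"] by (simp add: canon1)
qed

lemma CS2: "CS 2 = {[0,1]}"
proof
  show "CS 2 \<subseteq> {[0,1]}"
  proof
    fix u assume "u \<in> CS 2"
    then have u: "length u = 2" "canon u" "square_free u" unfolding CS_def by auto
    then obtain a b where ab: "u = [a,b]" using len2 by blast
    have "a = 0 \<and> (b = 0 \<or> b = 1)" "a \<noteq> b" using u ab by (simp_all add: canon2 sf2)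
    then show "u \<in> {[0,1]}" using ab by auto
  qed
  show "{[0,1]} \<subseteq> CS 2" unfolding CS_def by (simp add: canon2 sf2)
qed

lemma CS3: "CS 3 = {[0,1,0],[0,1,2]}"
proof
  show "CS 3 \<subseteq> {[0,1,0],[0,1,2]}"
  proof
    fix u assume "u \<in> CS 3"
    then have u: "length u = 3" "canon u" "square_free u" unfolding CS_def by auto
    then obtain a b c where ab: "u = [a,b,c]" using len3 by blast
    have h1: "canon [a,b,c]" and h2: "square_free [a,b,c]" using u ab by auto
    have "a = 0 \<and> (b = 0 \<or> b = 1) \<and> (c = 2 \<or> c = 0 \<or> (c = 1 \<and> b = 1))" "a \<noteq> b \<and> b \<noteq> c"
      using h1[unfolded canon3] h2[unfolded sf3] by blast+
    then show "u \<in> {[0,1,0],[0,1,2]}" using ab by auto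
  qed
  show "{[0,1,0],[0,1,2]} \<subseteq> CS 3" unfolding CS_def by (simp add: canon3 sf3)
qed

lemma CS4: "CS 4 = {[0,1,0,3],[0,1,2,0],[0,1,2,1],[0,1,2,3]}"
proof
  show "CS 4 \<subseteq> {[0,1,0,3],[0,1,2,0],[0,1,2,1],[0,1,2,3]}"
  proof
    fix u assume "u \<in> CS 4"
    then have u: "length u = 4" "canon u" "square_free u" unfolding CS_def by auto
    then obtain a b c d where ab: "u = [a,b,c,d]" using len4 by blast
    have h1: "canon [a,b,c,d]" and h2: "square_free [a,b,c,d]" using u ab by auto
    have "a = 0 \<and> (b = 0 \<or> b = 1) \<and> (c = 2 \<or> c = 0 \<or> (c = 1 \<and> b = 1))
        \<and> (d = 3 \<or> d = 0 \<or> (d = 1 \<and> b = 1) \<or> (d = 2 \<and> c = 2))"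
      "a \<noteq> b \<and> b \<noteq> c \<and> c \<noteq> d \<and> (a \<noteq> c \<or> b \<noteq> d)"
      using h1[unfolded canon4 canon3] h2[unfolded sf4] by blast+
    then show "u \<in> {[0,1,0,3],[0,1,2,0],[0,1,2,1],[0,1,2,3]}" using ab by auto
  qed
  show "{[0,1,0,3],[0,1,2,0],[0,1,2,1],[0,1,2,3]} \<subseteq> CS 4" unfolding CS_def
    by (simp add: canon4 canon3 sf4)
qed

lemma poly_ffp_prod: "poly (ffp k) y = (\<Prod>i<k. (y - int i))"
  by (induction k) (simp_all del: mult_pCons_right add: algebra_simps)

lemma int_ffn: "int (ffn x k) = (\<Prod>i<k. (int x - int i))"
  using poly_ffp[of k x] poly_ffp_prod[of k "int x"] by simp




lemma icount: "int (sqfree_count n x) = (\<Sum>u\<in>CS n. (\<Prod>i<card (set u). (int x - int i)))"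
  unfolding count_sum by (simp add: int_ffn)

lemma v0: "int (sqfree_count 0 x) = 1"
  unfolding icount CS0 by simp
lemma v1: "int (sqfree_count 1 x) = int x"
  unfolding icount CS1 by simp
lemma v2: "int (sqfree_count 2 x) = int x * (int x - 1)"
  unfolding icount CS2 by (simp add: numeral_2_eq_2)
lemma v3: "int (sqfree_count 3 x) = int x * (int x - 1)^2"
  unfolding icount CS3 by (simp add: eval_nat_numeral algebra_simps card_insert_if)
lemma v4: "int (sqfree_count 4 x) = (int x)^2 * (int x - 1) * (int x - 2)"
  unfolding icount CS4 by (simp add: eval_nat_numeral algebra_simps card_insert_if)

theorem proposition3:
  shows "(\<forall>n. \<exists>p :: int poly.
            degree p = n \<and> lead_coeff p = 1 \<and>
            (\<forall>x::nat. x \<ge> 1 \<longrightarrow> poly p (int x) = int (sqfree_count n x)) \<and>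
            (n > 1 \<longrightarrow> [:0, 1:] * [:-1, 1:] dvd p) \<and>
            (n > 3 \<longrightarrow> [:0, 1:] * [:-1, 1:] * [:-2, 1:] dvd p))
       \<and> (\<forall>x::nat. x \<ge> 1 \<longrightarrow>
            int (sqfree_count 0 x) = 1 \<and>
            int (sqfree_count 1 x) = int x \<and>
            int (sqfree_count 2 x) = int x * (int x - 1) \<and>
            int (sqfree_count 3 x) = int x * (int x - 1)^2 \<and>
            int (sqfree_count 4 x) = (int x)^2 * (int x - 1) * (int x - 2))"
proof (intro conjI allI impI)
  fix n
  show "\<exists>p :: int poly.
            degree p = n \<and> lead_coeff p = 1 \<and>
            (\<forall>x::nat. x \<ge> 1 \<longrightarrow> poly p (int x) = int (sqfree_count n x)) \<and>
            (n > 1 \<longrightarrow> [:0, 1:] * [:-1, 1:] dvd p) \<and>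
            (n > 3 \<longrightarrow> [:0, 1:] * [:-1, 1:] * [:-2, 1:] dvd p)"
    using Pn_deg[of n] poly_Pn[of n] Pn_dvd2[of n] Pn_dvd3[of n] by blast
qed (simp_all only: v0 v1 v2 v3 v4)


end
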